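(* Let $F=(n_F)_{n\ge1}\in\mathcal{T}_\lambda$, with functions $\lambda_K,\lambda_M$ as in the definition of $\mathcal{T}_\lambda$. Then for all integers $n\ge2$ and $1\le k\le n-1$, $$\binom{n}{k}_F=\lambda_K(k,n-k)\binom{n-1}{k-1}_F+\lambda_M(k,n-k)\binom{n-1}{k}_F,$$ and $\binom{n}{n}_F=\binom{n}{0}_F=1$.
   Context: Throughout, $\mathbb{N}=\{1,2,\dots\}$. The family $\mathcal{T}_\lambda$ consists of sequences $F=(n_F)_{n\ge1}$ of natural numbers for which there exist functions $\lambda_K,\lambda_M:\mathbb{N}\times\mathbb{N}\to\mathbb{N}\cup\{0\}$ such that $(k+m)_F=\lambda_K(k,m)\,k_F+\lambda_M(k,m)\,m_F$ for all $k,m\in\mathbb{N}$. We write $n_F!=n_F(n-1)_F\cdots1_F$, with $0_F!=1$, and $\binom{n}{m}_F=\frac{n_F!}{m_F!(n-m)_F!}$. *)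

theory Defs
  imports Complex_Main
begin

text \<open>A sequence F = (n_F) of natural numbers is modelled as F :: nat => nat,
  with only the values at n >= 1 relevant (required to be >= 1).\<close>

definition in_T_lambda_with :: "(nat \<Rightarrow> nat) \<Rightarrow> (nat \<Rightarrow> nat \<Rightarrow> nat) \<Rightarrow> (nat \<Rightarrow> nat \<Rightarrow> nat) \<Rightarrow> bool" where
  "in_T_lambda_with F lK lM \<longleftrightarrow>
     (\<forall>n\<ge>1. F n \<ge> 1) \<and>
     (\<forall>k\<ge>1. \<forall>m\<ge>1. F (k + m) = lK k m * F k + lM k m * F m)"

definition T_lambda :: "(nat \<Rightarrow> nat) set" where
  "T_lambda = {F. \<exists>lK lM. in_T_lambda_with F lK lM}"

definition F_fact :: "(nat \<Rightarrow> nat) \<Rightarrow> nat \<Rightarrow> nat" where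
  "F_fact F n = (\<Prod>i=1..n. F i)"

definition F_binom :: "(nat \<Rightarrow> nat) \<Rightarrow> nat \<Rightarrow> nat \<Rightarrow> rat" where
  "F_binom F n m = of_nat (F_fact F n) / (of_nat (F_fact F m) * of_nat (F_fact F (n - m)))"

end

theory Submission
  imports Defs
begin

lemma fact_Suc: "F_fact F (Suc n) = F (Suc n) * F_fact F n"
  unfolding F_fact_def by (simp add: prod.nat_ivl_Suc' mult.commute)

lemma fact_pos: assumes "\<forall>n\<ge>1. F n \<ge> (1::nat)" shows "F_fact F n > 0"
  unfolding F_fact_def using assms by (auto intro!: prod_pos)

lemma alg: fixes a b c d l u A fn :: rat
  assumes "a \<noteq> 0" "b \<noteq> 0" "c \<noteq> 0" "d \<noteq> 0"
  shows "fn = l * a + u * b \<Longrightarrow> fn * A / (a * c * (b * d)) = l * (A / (c * (b * d))) + u * (A / (a * c * d))"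
  using assms by (simp add: field_simps)

theorem corollary3:
  fixes F :: "nat \<Rightarrow> nat" and lK lM :: "nat \<Rightarrow> nat \<Rightarrow> nat"
  assumes "in_T_lambda_with F lK lM"
  shows "(\<forall>n k. n \<ge> 2 \<and> 1 \<le> k \<and> k \<le> n - 1 \<longrightarrow>
            F_binom F n k = of_nat (lK k (n - k)) * F_binom F (n - 1) (k - 1)
                          + of_nat (lM k (n - k)) * F_binom F (n - 1) k)
       \<and> (\<forall>n. F_binom F n n = 1 \<and> F_binom F n 0 = 1)"
proof -
  have pos: "\<forall>n\<ge>1. F n \<ge> 1" and rec: "\<forall>k\<ge>1. \<forall>m\<ge>1. F (k + m) = lK k m * F k + lM k m * F m"
    using assms unfolding in_T_lambda_with_def by auto
  have fp: "\<And>n. (of_nat (F_fact F n) :: rat) \<noteq> 0" using fact_pos[OF pos] by simp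
  have Fp: "\<And>n. n \<ge> 1 \<Longrightarrow> (of_nat (F n) :: rat) \<noteq> 0" using pos by fastforce
  have main: "F_binom F n k = of_nat (lK k (n - k)) * F_binom F (n - 1) (k - 1)
                          + of_nat (lM k (n - k)) * F_binom F (n - 1) k"
    if h: "n \<ge> 2" "1 \<le> k" "k \<le> n - 1" for n k
  proof -
    obtain k' m' where k: "k = Suc k'" and m: "n - k = Suc m'"
    proof -
      have "k \<noteq> 0" "n - k \<noteq> 0" using h by auto
      thus ?thesis using that not0_implies_Suc by blast
    qed
    define m where "m = n - k"
    have n: "n = Suc (k' + Suc m')" using h k m by linarith
    have e1: "n - 1 = k' + Suc m'" using n by simp
    have e2: "n - 1 - (k - 1) = Suc m'" using n k by simp
    have e3: "n - 1 - k = m'" using n k by simp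
    have r: "F n = lK k (n-k) * F k + lM k (n-k) * F (n-k)"
    proof -
      have "n = k + (n - k)" using h by simp
      moreover have "n - k \<ge> 1" using m by simp
      ultimately show ?thesis using rec h(2) by (metis)
    qed
    let ?A = "(of_nat (F_fact F (k' + Suc m')) :: rat)"
    let ?K = "(of_nat (F_fact F k') :: rat)"
    let ?M = "(of_nat (F_fact F m') :: rat)"
    have fn: "of_nat (F_fact F n) = of_nat (F n) * ?A" using n fact_Suc[of F "k' + Suc m'"] by simp
    have fk: "(of_nat (F_fact F k)::rat) = of_nat (F k) * ?K" using k fact_Suc[of F k'] by simp
    have fm: "(of_nat (F_fact F (n-k))::rat) = of_nat (F (n-k)) * ?M" using m fact_Suc[of F m'] by simp
    have Fk: "(of_nat (F k)::rat) \<noteq> 0" using Fp h by simp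
    have Fm: "(of_nat (F (n-k))::rat) \<noteq> 0" using Fp m by simp
    have "F_binom F n k = of_nat (F n) * ?A / (of_nat (F k) * ?K * (of_nat (F (n-k)) * ?M))"
      unfolding F_binom_def using fn fk fm by simp
    moreover have "F_binom F (n - 1) (k - 1) = ?A / (?K * (of_nat (F (n-k)) * ?M))"
      unfolding F_binom_def e1[symmetric] e2 using fm m k by simp
    moreover have "F_binom F (n - 1) k = ?A / (of_nat (F k) * ?K * ?M)"
      unfolding F_binom_def e1[symmetric] e3 using fk by simp
    moreover have "(of_nat (F n)::rat) = of_nat (lK k (n-k)) * of_nat (F k) + of_nat (lM k (n-k)) * of_nat (F (n-k))"
      using r by simp
    ultimately show ?thesis
      using alg[OF Fk Fm fp[of k'] fp[of m']] by simp
  qed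
  show ?thesis
    using main fp by (auto simp: F_binom_def F_fact_def)
qed

end
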